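(* Let $\mathcal{H}$ be a Hilbert space and $T\in\mathcal{B}(\mathcal{H})$ a convex operator, i.e. $T^{*2}T^2-2T^*T+I\ge0$, satisfying $$c:=\sup_{n\ge0}\frac{\|T^n\|^2}{n+1}<\infty.$$ Let $\Delta=\frac12T^{*2}T^2-T^*T+\frac12 I$ (a positive operator) and let $T_1$ on $\mathcal{H}_1=\mathcal{H}\oplus\mathcal{H}$ be given by the block matrix $$T_1=\begin{pmatrix}T&0\\ \Delta^{1/2}&0\end{pmatrix}.$$ Then: (i) $\|T_1^nh\|^2=\frac12\big(\|T^{n+1}h\|^2+\|T^{n-1}h\|^2\big)$ for all $h\in\mathcal{H}\cong\mathcal{H}\oplus\{0\}$ and all $n\ge1$; (ii) $\|T_1^n\|^2\le c(n+1)$ for all $n\ge0$; (iii) $T_1$ is convex. *)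

theory Defs
  imports "HOL-Analysis.Analysis"
begin

definition is_adjoint :: "('a::real_inner \<Rightarrow> 'a) \<Rightarrow> ('a \<Rightarrow> 'a) \<Rightarrow> bool" where
  "is_adjoint T Ts \<longleftrightarrow> (\<forall>x y. inner (T x) y = inner x (Ts y))"

definition positive_op :: "('a::real_inner \<Rightarrow> 'a) \<Rightarrow> bool" where
  "positive_op A \<longleftrightarrow> bounded_linear A \<and> is_adjoint A A \<and> (\<forall>h. 0 \<le> inner (A h) h)"

definition convex_op :: "('a::real_inner \<Rightarrow> 'a) \<Rightarrow> bool" where
  "convex_op T \<longleftrightarrow> bounded_linear T \<and>
     (\<exists>Ts. is_adjoint T Ts \<and> positive_op (\<lambda>h. Ts (Ts (T (T h))) - 2 *\<^sub>R Ts (T h) + h))"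

end

theory Submission
  imports Defs
begin

lemma adj_bl:
  fixes T Ts :: "'a::real_inner \<Rightarrow> 'a"
  assumes bl: "bounded_linear T" and adj: "is_adjoint T Ts"
  shows "bounded_linear Ts"
proof -
  have ad: "\<And>x y. inner (T x) y = inner x (Ts y)" using adj unfolding is_adjoint_def by blast
  have eqI: "a = b" if "\<And>z. inner z a = inner z b" for a b :: 'a
  proof -
    have "inner (a - b) a = inner (a - b) b" using that by blast
    hence "inner (a - b) (a - b) = 0" by (simp add: inner_diff_right)
    thus ?thesis by simp
  qed
  have add: "Ts (a + b) = Ts a + Ts b" for a b
    by (rule eqI) (simp add: ad[symmetric] inner_add_right)
  have sc: "Ts (r *\<^sub>R a) = r *\<^sub>R Ts a" for r a
    by (rule eqI) (simp add: ad[symmetric])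
  obtain K where K: "\<And>x. norm (T x) \<le> norm x * K" "K > 0"
    using bounded_linear.pos_bounded[OF bl] by blast
  have bd: "norm (Ts y) \<le> norm y * K" for y
  proof (cases "Ts y = 0")
    case True then show ?thesis using K by simp
  next
    case False
    have "(norm (Ts y))\<^sup>2 = inner (Ts y) (Ts y)" by (simp add: power2_norm_eq_inner)
    also have "\<dots> = inner (T (Ts y)) y" by (simp add: ad)
    also have "\<dots> \<le> norm (T (Ts y)) * norm y" by (rule norm_cauchy_schwarz)
    also have "\<dots> \<le> norm (Ts y) * K * norm y" using K by (simp add: mult_right_mono)
    finally have "norm (Ts y) * norm (Ts y) \<le> norm (Ts y) * (norm y * K)"
      by (simp add: power2_eq_square algebra_simps)
    thus ?thesis using False by simp
  qed
  show ?thesis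
    by (rule bounded_linear_intro[where K=K]) (auto simp: add sc bd)
qed

lemma pow_bl: "bounded_linear (f :: 'a::real_normed_vector \<Rightarrow> 'a) \<Longrightarrow> bounded_linear (f ^^ n)"
proof (induction n)
  case 0 have "f ^^ 0 = (\<lambda>x. x)" by (simp add: id_def)
  then show ?case using bounded_linear_ident by metis
next
  case (Suc n)
  have "f ^^ Suc n = (\<lambda>x. f ((f ^^ n) x))" by auto
  then show ?case using Suc bounded_linear_compose by metis
qed

theorem lemma3p1:
  fixes T Ts S :: "'a::{real_inner, complete_space} \<Rightarrow> 'a"
    and T1 :: "'a \<times> 'a \<Rightarrow> 'a \<times> 'a"
    and c :: real
  assumes T_bl: "bounded_linear T"
    and T_adj: "is_adjoint T Ts"
    and T_convex: "convex_op T"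
    and bdd: "bdd_above (range (\<lambda>n::nat. (onorm (T ^^ n))\<^sup>2 / real (n + 1)))"
    and c_def: "c = (SUP n::nat. (onorm (T ^^ n))\<^sup>2 / real (n + 1))"
    and S_pos: "positive_op S"
    and S_sq: "\<And>h. S (S h) = (1/2) *\<^sub>R Ts (Ts (T (T h))) - Ts (T h) + (1/2) *\<^sub>R h"
    and T1_def: "\<And>x y. T1 (x, y) = (T x, S x)"
  shows "(\<forall>n\<ge>1. \<forall>h. (norm ((T1 ^^ n) (h, 0)))\<^sup>2
            = (1/2) * ((norm ((T ^^ (n + 1)) h))\<^sup>2 + (norm ((T ^^ (n - 1)) h))\<^sup>2))
       \<and> (\<forall>n. (onorm (T1 ^^ n))\<^sup>2 \<le> c * real (n + 1))
       \<and> convex_op T1"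
proof -
  have ad: "\<And>x y. inner (T x) y = inner x (Ts y)" using T_adj unfolding is_adjoint_def by blast
  have S_bl: "bounded_linear S" and Sad: "\<And>x y. inner (S x) y = inner x (S y)"
    and Spos: "\<And>h. 0 \<le> inner (S h) h"
    using S_pos unfolding positive_op_def is_adjoint_def by blast+
  have Ts_bl: "bounded_linear Ts" by (rule adj_bl[OF T_bl T_adj])
  have T1eq: "T1 = (\<lambda>p. (T (fst p), S (fst p)))" by (rule ext) (metis T1_def prod.collapse)
  have T1_bl: "bounded_linear T1" unfolding T1eq
    by (intro bounded_linear_Pair bounded_linear_compose[OF T_bl] bounded_linear_compose[OF S_bl]
        bounded_linear_fst)
  have pw: "(T1 ^^ Suc m) (x, y) = ((T ^^ Suc m) x, S ((T ^^ m) x))" for m x y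
    by (induction m) (simp_all add: T1_def)
  have Snorm: "(norm (S u))\<^sup>2 = (1/2) * (norm (T (T u)))\<^sup>2 - (norm (T u))\<^sup>2 + (1/2) * (norm u)\<^sup>2" for u
  proof -
    have "(norm (S u))\<^sup>2 = inner (S u) (S u)" by (simp add: power2_norm_eq_inner)
    also have "\<dots> = inner u (S (S u))" by (simp add: Sad)
    also have "\<dots> = (1/2) * inner u (Ts (Ts (T (T u)))) - inner u (Ts (T u)) + (1/2) * inner u u"
      by (simp add: S_sq inner_add_right inner_diff_right)
    also have "\<dots> = (1/2) * inner (T (T u)) (T (T u)) - inner (T u) (T u) + (1/2) * inner u u"
      by (simp add: ad[symmetric])
    finally show ?thesis by (simp add: power2_norm_eq_inner)
  qed
  have key: "(norm ((T1 ^^ n) (x, y)))\<^sup>2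
      = (1/2) * ((norm ((T ^^ (n + 1)) x))\<^sup>2 + (norm ((T ^^ (n - 1)) x))\<^sup>2)" if n1: "n \<ge> 1" for n x y
  proof -
    obtain m where m: "n = Suc m" using n1 by (cases n) auto
    show ?thesis unfolding m pw norm_Pair
      by (simp add: Snorm)
  qed
  have part1: "\<forall>n\<ge>1. \<forall>h. (norm ((T1 ^^ n) (h, 0)))\<^sup>2
            = (1/2) * ((norm ((T ^^ (n + 1)) h))\<^sup>2 + (norm ((T ^^ (n - 1)) h))\<^sup>2)"
    using key by blast
  have cup: "(onorm (T ^^ k))\<^sup>2 \<le> c * real (k + 1)" for k
  proof -
    have "(onorm (T ^^ k))\<^sup>2 / real (k + 1) \<le> c" unfolding c_def
      by (rule cSUP_upper[OF _ bdd]) simp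
    thus ?thesis by (simp add: divide_le_eq mult.commute)
  qed
  have Tk: "(norm ((T ^^ k) x))\<^sup>2 \<le> c * real (k + 1) * (norm x)\<^sup>2" for k x
  proof -
    have "norm ((T ^^ k) x) \<le> onorm (T ^^ k) * norm x" by (rule onorm[OF pow_bl[OF T_bl]])
    hence "(norm ((T ^^ k) x))\<^sup>2 \<le> (onorm (T ^^ k) * norm x)\<^sup>2"
      by (simp add: power_mono)
    also have "\<dots> = (onorm (T ^^ k))\<^sup>2 * (norm x)\<^sup>2" by (simp add: power_mult_distrib)
    also have "\<dots> \<le> c * real (k + 1) * (norm x)\<^sup>2" using cup by (simp add: mult_right_mono)
    finally show ?thesis .
  qed
  have c0: "0 \<le> c" using cup[of 0] by (smt (verit) zero_le_power2 of_nat_0 mult_cancel_left1 add_0 of_nat_1)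
  have part2: "(onorm (T1 ^^ n))\<^sup>2 \<le> c * real (n + 1)" for n
  proof -
    have b: "norm ((T1 ^^ n) p) \<le> sqrt (c * real (n + 1)) * norm p" for p
    proof -
      obtain x y where p: "p = (x, y)" by (cases p)
      have sq: "(norm ((T1 ^^ n) p))\<^sup>2 \<le> c * real (n + 1) * (norm p)\<^sup>2"
      proof (cases "n = 0")
        case True
        show ?thesis
        proof (cases "p = 0")
          case True then show ?thesis using \<open>n = 0\<close> by simp
        next
          case False
          then obtain e :: 'a where e: "e \<noteq> 0" unfolding p by (metis zero_prod_def)
          have "norm (id e) / norm e \<le> onorm (id :: 'a \<Rightarrow> 'a)"
            by (rule le_onorm) (simp add: bounded_linear_ident id_def)
          hence "1 \<le> onorm (T ^^ 0)" using e by simp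
          hence "1 \<le> (onorm (T ^^ 0))\<^sup>2" by (simp add: one_le_power)
          hence "1 \<le> c" using cup[of 0] by simp
          then show ?thesis using \<open>n = 0\<close> by (simp add: mult_right_mono[of 1 c, simplified])
        qed
      next
        case False
        hence "(norm ((T1 ^^ n) p))\<^sup>2 = (1/2) * ((norm ((T ^^ (n + 1)) x))\<^sup>2 + (norm ((T ^^ (n - 1)) x))\<^sup>2)"
          unfolding p by (intro key) simp
        also have "\<dots> \<le> (1/2) * (c * real (n + 1 + 1) * (norm x)\<^sup>2 + c * real (n - 1 + 1) * (norm x)\<^sup>2)"
          using Tk[of "n+1" x] Tk[of "n-1" x] by simp
        also have "\<dots> = c * real (n + 1) * (norm x)\<^sup>2" using False
          by (simp add: of_nat_diff algebra_simps)
        also have "\<dots> \<le> c * real (n + 1) * (norm p)\<^sup>2" unfolding p norm_Pair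
          using c0 by (intro mult_left_mono) simp_all
        finally show ?thesis .
      qed
      have "norm ((T1 ^^ n) p) = sqrt ((norm ((T1 ^^ n) p))\<^sup>2)" by simp
      also have "\<dots> \<le> sqrt (c * real (n + 1) * (norm p)\<^sup>2)" using sq by (rule real_sqrt_le_mono)
      also have "\<dots> = sqrt (c * real (n + 1)) * norm p" by (simp add: real_sqrt_mult)
      finally show ?thesis .
    qed
    have "onorm (T1 ^^ n) \<le> sqrt (c * real (n + 1))"
      by (rule onorm_bound[OF _ b]) (simp add: c0)
    moreover have "0 \<le> onorm (T1 ^^ n)" by (rule onorm_pos_le[OF pow_bl[OF T1_bl]])
    ultimately have "(onorm (T1 ^^ n))\<^sup>2 \<le> (sqrt (c * real (n + 1)))\<^sup>2" by (simp add: power_mono)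
    thus ?thesis using c0 by simp
  qed
  define T1s where "T1s = (\<lambda>q::'a\<times>'a. (Ts (fst q) + S (snd q), 0::'a))"
  have T1adj: "is_adjoint T1 T1s" unfolding is_adjoint_def
  proof (intro allI)
    fix p q :: "'a \<times> 'a"
    show "inner (T1 p) q = inner p (T1s q)"
      by (cases p, cases q) (simp add: T1_def T1s_def inner_add_right ad Sad)
  qed
  have Tsl: "bounded_linear Ts" by (fact Ts_bl)
  have Sl: "bounded_linear S" by (fact S_bl)
  have Qeq: "T1s (T1s (T1 (T1 p))) - 2 *\<^sub>R T1s (T1 p) + p = (Ts (S (S (T (fst p)))), snd p)" for p
  proof -
    obtain x y where p: "p = (x, y)" by (cases p)
    have "Ts (Ts (T (T x)) + S (S (T x))) + S 0 - 2 *\<^sub>R (Ts (T x) + S (S x)) + x = Ts (S (S (T x)))"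
      by (simp add: linear_add[OF bounded_linear.linear[OF Tsl]] linear_0[OF bounded_linear.linear[OF Sl]] S_sq[of x] algebra_simps)
    thus ?thesis by (simp add: p T1_def T1s_def)
  qed
  have Qbl: "bounded_linear (\<lambda>p. (Ts (S (S (T (fst p)))), snd p))"
      by (intro bounded_linear_Pair bounded_linear_compose[OF Ts_bl] bounded_linear_compose[OF S_bl]
        bounded_linear_compose[OF T_bl] bounded_linear_fst bounded_linear_snd)
  have e2: "inner b (Ts (S (S (T a)))) = inner (S (T b)) (S (T a))" for a b
    by (metis ad Sad)
  have Qadj: "inner (Ts (S (S (T (fst p)))), snd p) q = inner p (Ts (S (S (T (fst q)))), snd q)"
    for p q
  proof -
    obtain a b where p1: "p = (a, b)" by (cases p)
    obtain a' b' where q1: "q = (a', b')" by (cases q)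
    show ?thesis using e2[of a' a] e2[of a a'] by (simp add: p1 q1 inner_commute)
  qed
  have Qnn: "0 \<le> inner (Ts (S (S (T (fst h)))), snd h) h" for h
  proof -
    obtain a b where p1: "h = (a, b)" by (cases h)
    show ?thesis using e2[of a a] by (simp add: p1 inner_commute)
  qed
  have Qpos: "positive_op (\<lambda>p. (Ts (S (S (T (fst p)))), snd p))"
    unfolding positive_op_def is_adjoint_def by (intro conjI allI Qbl Qadj Qnn)
  have part3: "convex_op T1" unfolding convex_op_def
    using T1_bl T1adj Qpos Qeq by (metis (no_types, lifting) ext)
  show ?thesis using part1 part2 part3 by blast
qed

end
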